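(* Let $\mathcal H$ be a hypothesis class over $\mathcal X$ and let $R\subseteq\mathcal X$ be a set of size $n$ that is shattered by $\mathcal H$. There exist two functions $F_a,F_b$ mapping $n$-bit strings to samples of labelled examples with points from $R$ such that for every $x,y\in\{0,1\}^n$, $x\cap y=\emptyset$ (identifying bit strings with subsets of $[n]$) if and only if the joint sample $S=(F_a(x),F_b(y))$ is realizable by $\mathcal H|_R$.
   Context: A sample is a finite sequence of examples $(x,y)\in\mathcal X\times\{\pm1\}$; $(S_1,S_2)$ denotes concatenation. $\mathcal H|_R=\{h|_R:h\in\mathcal H\}$. A sample is realizable by a class if some member of the class agrees with all its examples. *)

theory Defs
  imports Main "HOL-Library.FuncSet"
begin

definition labels :: "int set" where "labels = {-1, 1}"

definition shatters :: "('x \<Rightarrow> int) set \<Rightarrow> 'x set \<Rightarrow> bool" where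
  "shatters H R \<longleftrightarrow> (\<forall>f. (\<forall>x\<in>R. f x \<in> labels) \<longrightarrow> (\<exists>h\<in>H. \<forall>x\<in>R. h x = f x))"

definition restrict_class :: "('x \<Rightarrow> int) set \<Rightarrow> 'x set \<Rightarrow> ('x \<Rightarrow> int) set" where
  "restrict_class H R = (\<lambda>h. restrict h R) ` H"

definition realizable :: "('x \<Rightarrow> int) set \<Rightarrow> ('x \<times> int) list \<Rightarrow> bool" where
  "realizable C S \<longleftrightarrow> (\<exists>h\<in>C. \<forall>(x, y)\<in>set S. h x = y)"

end

theory Submission
  imports Defs
begin

theorem lemma4:
  fixes H :: "('x \<Rightarrow> int) set" and R :: "'x set" and n :: nat
  assumes "\<forall>h\<in>H. \<forall>x. h x \<in> labels"
    and "finite R" and "card R = n"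
    and "shatters H R"
  shows "\<exists>Fa Fb :: bool list \<Rightarrow> ('x \<times> int) list.
           (\<forall>x. length x = n \<longrightarrow> set (Fa x) \<subseteq> R \<times> labels \<and> set (Fb x) \<subseteq> R \<times> labels) \<and>
           (\<forall>x y. length x = n \<longrightarrow> length y = n \<longrightarrow>
              ((\<forall>i<n. \<not> (x ! i \<and> y ! i)) \<longleftrightarrow> realizable (restrict_class H R) (Fa x @ Fb y)))"
proof -
  obtain rs where rs: "set rs = R" "distinct rs" using finite_distinct_list[OF assms(2)] by blast
  have len: "length rs = n" using rs assms(3) distinct_card by fastforce
  define Fa where "Fa = (\<lambda>x::bool list. map (\<lambda>i. (rs!i, 1::int)) (filter (\<lambda>i. x!i) [0..<n]))"
  define Fb where "Fb = (\<lambda>x::bool list. map (\<lambda>i. (rs!i, -1::int)) (filter (\<lambda>i. x!i) [0..<n]))"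
  have memR: "i < n \<Longrightarrow> rs ! i \<in> R" for i using rs len by auto
  show ?thesis
  proof (intro exI conjI allI impI)
    fix x :: "bool list"
    show "set (Fa x) \<subseteq> R \<times> labels" "set (Fb x) \<subseteq> R \<times> labels"
      using memR by (auto simp: Fa_def Fb_def labels_def)
  next
    fix x y :: "bool list"
    assume lx: "length x = n" and ly: "length y = n"
    show "(\<forall>i<n. \<not> (x ! i \<and> y ! i)) \<longleftrightarrow> realizable (restrict_class H R) (Fa x @ Fb y)"
    proof
      assume dis: "\<forall>i<n. \<not> (x ! i \<and> y ! i)"
      define f where "f = (\<lambda>z. if \<exists>i<n. z = rs!i \<and> x!i then 1 else (-1::int))"
      have "\<forall>z\<in>R. f z \<in> labels" by (auto simp: f_def labels_def)
      then obtain h where h: "h \<in> H" "\<forall>z\<in>R. h z = f z"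
        using assms(4) unfolding shatters_def by blast
      have hr: "restrict h R \<in> restrict_class H R" using h(1) by (auto simp: restrict_class_def)
      have inj: "i < n \<Longrightarrow> j < n \<Longrightarrow> rs!i = rs!j \<Longrightarrow> i = j" for i j
        using rs(2) len nth_eq_iff_index_eq by blast
      have "\<forall>(a, b)\<in>set (Fa x @ Fb y). restrict h R a = b"
      proof (intro ballI, clarify)
        fix a b assume ab: "(a, b) \<in> set (Fa x @ Fb y)"
        then consider (A) i where "i < n" "x!i" "a = rs!i" "b = 1"
          | (B) i where "i < n" "y!i" "a = rs!i" "b = -1"
          by (auto simp: Fa_def Fb_def)
        then show "restrict h R a = b"
        proof cases
          case (A i)
          then show ?thesis using memR h(2) by (auto simp: f_def)
        next
          case (B i)
          then have "\<not> (\<exists>j<n. rs!i = rs!j \<and> x!j)" using inj dis by blast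
          then show ?thesis using memR[OF B(1)] h(2) B by (auto simp: f_def)
        qed
      qed
      then show "realizable (restrict_class H R) (Fa x @ Fb y)"
        using hr unfolding realizable_def by blast
    next
      assume "realizable (restrict_class H R) (Fa x @ Fb y)"
      then obtain g where g: "\<forall>(a, b)\<in>set (Fa x @ Fb y). g a = b" unfolding realizable_def by blast
      show "\<forall>i<n. \<not> (x ! i \<and> y ! i)"
      proof (intro allI impI notI)
        fix i assume "i < n" "x ! i \<and> y ! i"
        then have "(rs!i, 1) \<in> set (Fa x @ Fb y)" "(rs!i, -1) \<in> set (Fa x @ Fb y)"
          by (auto simp: Fa_def Fb_def)
        then have "g (rs!i) = 1" "g (rs!i) = -1" using g by fastforce+
        then show False by simp
      qed
    qed
  qed
qed

end
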